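(* Let $P$ be a finite lattice and $f\in\mathcal{L}_P$, and let $\mathcal{W}_f=\{w\in\mathcal{L}_P: w\le f,\ w\text{ prime}\}=\{w_1,\dots,w_m\}$. Then $f=w_1+\cdots+w_m$.
   Context: $P$ is a finite lattice. $\mathcal{L}_P$ is the set of maps $f:P\to P$ satisfying (A.1) $a\le f(a)$; (A.2) $a\le b\Rightarrow f(a)\le f(b)$; (A.3) $f(f(a))=f(a)$, ordered pointwise; it is a lattice with join $+$. $\Phi f=\{a:f(a)=a\}$. $f$ is prime if $P\setminus\Phi f$ is closed under $\wedge$. *)

theory Defs
  imports Main
begin

text \<open>Closure operators on a lattice: the elements of L_P (conditions A.1--A.3).\<close>
definition closure_op :: "('a::lattice \<Rightarrow> 'a) \<Rightarrow> bool" where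
  "closure_op f \<longleftrightarrow>
     (\<forall>a. a \<le> f a) \<and> (\<forall>a b. a \<le> b \<longrightarrow> f a \<le> f b) \<and> (\<forall>a. f (f a) = f a)"

definition Phi :: "('a \<Rightarrow> 'a) \<Rightarrow> 'a set" where
  "Phi f = {a. f a = a}"

definition prime_cl :: "('a::lattice \<Rightarrow> 'a) \<Rightarrow> bool" where
  "prime_cl f \<longleftrightarrow> (\<forall>a b. a \<notin> Phi f \<longrightarrow> b \<notin> Phi f \<longrightarrow> inf a b \<notin> Phi f)"

definition W_set :: "('a::lattice \<Rightarrow> 'a) \<Rightarrow> ('a \<Rightarrow> 'a) set" where
  "W_set f = {w. closure_op w \<and> w \<le> f \<and> prime_cl w}"

definition is_L_join :: "('a::lattice \<Rightarrow> 'a) set \<Rightarrow> ('a \<Rightarrow> 'a) \<Rightarrow> bool" where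
  "is_L_join W j \<longleftrightarrow> closure_op j \<and> (\<forall>w\<in>W. w \<le> j) \<and>
     (\<forall>g. closure_op g \<longrightarrow> (\<forall>w\<in>W. w \<le> g) \<longrightarrow> j \<le> g)"

end

theory Submission
  imports Defs
begin

definition wa :: "('a::lattice \<Rightarrow> 'a) \<Rightarrow> 'a \<Rightarrow> 'a \<Rightarrow> 'a" where
  "wa f a x = (if a \<le> x then sup x (f a) else x)"

lemma wa_in:
  assumes cf: "closure_op f"
  shows "wa f a \<in> W_set f"
proof -
  have A1: "\<forall>x. x \<le> f x" and A2: "\<forall>x y. x \<le> y \<longrightarrow> f x \<le> f y"
    using cf unfolding closure_op_def by auto
  have c: "closure_op (wa f a)"
    unfolding closure_op_def wa_def
    by (auto intro: le_supI1 le_supI2 sup_mono order_trans)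
  have le: "wa f a \<le> f"
    unfolding le_fun_def wa_def using A1 A2 by auto
  have ph: "\<And>x. x \<in> Phi (wa f a) \<longleftrightarrow> (a \<le> x \<longrightarrow> f a \<le> x)"
    unfolding Phi_def wa_def by (auto simp: sup_absorb1 sup_commute le_iff_sup)
  have p: "prime_cl (wa f a)"
    unfolding prime_cl_def ph by (auto intro: order_trans)
  show ?thesis using c le p unfolding W_set_def by auto
qed

theorem mainTheorem14:
  fixes f :: "'a::{finite, lattice} \<Rightarrow> 'a"
  assumes "closure_op f"
  shows "is_L_join (W_set f) f"
proof -
  have A1: "\<forall>x. x \<le> f x" and A2: "\<forall>x y. x \<le> y \<longrightarrow> f x \<le> f y"
    and A3: "\<forall>x. f (f x) = f x"
    using assms unfolding closure_op_def by auto
  have "f \<le> g" if cg: "closure_op g" and ub: "\<forall>w\<in>W_set f. w \<le> g" for g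
  proof (rule le_funI)
    fix x
    have g1: "\<forall>x. x \<le> g x" and g3: "\<forall>x. g (g x) = g x"
      using cg unfolding closure_op_def by auto
    let ?y = "g x"
    have "f ?y \<le> ?y"
    proof (rule ccontr)
      assume n: "\<not> f ?y \<le> ?y"
      have "wa f ?y \<le> g" using ub wa_in[OF assms] by blast
      hence "wa f ?y ?y \<le> g ?y" by (simp add: le_fun_def)
      hence "sup ?y (f ?y) \<le> ?y" using g3 by (simp add: wa_def)
      thus False using n by simp
    qed
    moreover have "f x \<le> f ?y" using A2 g1 by blast
    ultimately show "f x \<le> g x" by simp
  qed
  thus ?thesis using assms unfolding is_L_join_def W_set_def by auto
qed

end
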